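(* Let $\xi=(\tau_L,\delta_L,\tau_R,\delta_R)\in\mathbb{R}^4$, let $P\in\mathbb{R}^2$ and $v\in\mathbb{R}^2$, and let $\alpha$ be the line segment from $P$ to $Q=P+v$, with length $|\alpha|=\|v\|$. Let $s$ be the length of the longest line segment contained in $f_\xi(\alpha)$ and let $c_L,c_R>0$. If $\|A_Lv\|\ge c_L\|v\|$ and $\|A_Rv\|\ge c_R\|v\|$, then $s\ge\frac{c_Lc_R}{c_L+c_R}\,|\alpha|$.
   Context: For $\xi=(\tau_L,\delta_L,\tau_R,\delta_R)\in\mathbb{R}^4$ define $f_\xi:\mathbb{R}^2\to\mathbb{R}^2$ by $f_\xi(x,y)=(\tau_L x+y+1,\,-\delta_L x)$ if $x\le 0$ and $f_\xi(x,y)=(\tau_R x+y+1,\,-\delta_R x)$ if $x\ge 0$, and let $A_L=\begin{bmatrix}\tau_L&1\\-\delta_L&0\end{bmatrix}$, $A_R=\begin{bmatrix}\tau_R&1\\-\delta_R&0\end{bmatrix}$. $\|\cdot\|$ is the Euclidean norm; the length of a line segment is the distance between its endpoints. *)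

theory Defs
  imports "HOL-Analysis.Analysis"
begin

text \<open>Border-collision normal form; parameter xi = (tauL, deltaL, tauR, deltaR).\<close>
definition bcnf :: "real \<times> real \<times> real \<times> real \<Rightarrow> real^2 \<Rightarrow> real^2" where
  "bcnf xi p = (case xi of (tL, dL, tR, dR) \<Rightarrow>
     (if p$1 \<le> 0 then vector [tL * p$1 + p$2 + 1, - dL * p$1]
      else vector [tR * p$1 + p$2 + 1, - dR * p$1]))"

definition AL :: "real \<times> real \<times> real \<times> real \<Rightarrow> real^2^2" where
  "AL xi = (case xi of (tL, dL, tR, dR) \<Rightarrow> vector [vector [tL, 1], vector [- dL, 0]])"

definition AR :: "real \<times> real \<times> real \<times> real \<Rightarrow> real^2^2" where
  "AR xi = (case xi of (tL, dL, tR, dR) \<Rightarrow> vector [vector [tR, 1], vector [- dR, 0]])"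

text \<open>Length of the longest line segment contained in a set S.\<close>
definition longest_segment_length :: "(real^2) set \<Rightarrow> real" where
  "longest_segment_length S = Sup {dist a b | a b. closed_segment a b \<subseteq> S}"

end

theory Submission
  imports Defs
begin

definition gL :: "real \<times> real \<times> real \<times> real \<Rightarrow> real^2 \<Rightarrow> real^2" where
  "gL xi p = AL xi *v p + vector [1, 0]"
definition gR :: "real \<times> real \<times> real \<times> real \<Rightarrow> real^2 \<Rightarrow> real^2" where
  "gR xi p = AR xi *v p + vector [1, 0]"

lemma bcnf_L: "p$1 \<le> 0 \<Longrightarrow> bcnf xi p = gL xi p"
  by (cases xi) (auto simp: bcnf_def gL_def AL_def vec_eq_iff forall_2 matrix_vector_mult_def sum_2)

lemma bcnf_R: "p$1 \<ge> 0 \<Longrightarrow> bcnf xi p = gR xi p"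
  by (cases xi) (auto simp: bcnf_def gR_def AR_def vec_eq_iff forall_2 matrix_vector_mult_def sum_2)

lemma gL_comb: "gL xi ((1-u) *\<^sub>R a + u *\<^sub>R b) = (1-u) *\<^sub>R gL xi a + u *\<^sub>R gL xi b"
  unfolding gL_def by (simp add: vec.add vec.scale algebra_simps)
lemma gR_comb: "gR xi ((1-u) *\<^sub>R a + u *\<^sub>R b) = (1-u) *\<^sub>R gR xi a + u *\<^sub>R gR xi b"
  unfolding gR_def by (simp add: vec.add vec.scale algebra_simps)

lemma seg_img:
  assumes sub: "closed_segment a b \<subseteq> T"
    and eq: "\<And>x. x \<in> closed_segment a b \<Longrightarrow> bcnf xi x = g x"
    and comb: "\<And>u. g ((1-u) *\<^sub>R a + u *\<^sub>R b) = (1-u) *\<^sub>R g a + u *\<^sub>R g b"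
  shows "closed_segment (g a) (g b) \<subseteq> bcnf xi ` T"
proof
  fix y assume "y \<in> closed_segment (g a) (g b)"
  then obtain u where u: "0 \<le> u" "u \<le> 1" "y = (1-u) *\<^sub>R g a + u *\<^sub>R g b"
    by (auto simp: closed_segment_def)
  define x where "x = (1-u) *\<^sub>R a + u *\<^sub>R b"
  have x: "x \<in> closed_segment a b" using u by (auto simp: closed_segment_def x_def)
  have "y = bcnf xi x" using u comb eq[OF x] by (simp add: x_def)
  then show "y \<in> bcnf xi ` T" using x sub by auto
qed

lemma bdd:
  fixes T :: "(real^2) set"
  assumes "compact T"
  shows "bdd_above {dist a b | a b. closed_segment a b \<subseteq> bcnf xi ` T}"
proof -
  have "bcnf xi ` T \<subseteq> gL xi ` T \<union> gR xi ` T"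
  proof
    fix y assume "y \<in> bcnf xi ` T"
    then obtain x where x: "x \<in> T" "y = bcnf xi x" by blast
    show "y \<in> gL xi ` T \<union> gR xi ` T"
    proof (cases "x$1 \<le> 0")
      case True thus ?thesis using x bcnf_L[OF True] by blast
    next
      case False thus ?thesis using x bcnf_R[of x xi] by auto
    qed
  qed
  moreover have "compact (gL xi ` T)" "compact (gR xi ` T)"
    unfolding gL_def gR_def
    by (auto intro!: compact_continuous_image assms continuous_intros)
  ultimately have "bounded (bcnf xi ` T)"
    by (meson bounded_Un bounded_subset compact_imp_bounded)
  then obtain B where B: "\<And>x. x \<in> bcnf xi ` T \<Longrightarrow> norm x \<le> B"
    by (auto simp: bounded_iff)
  show ?thesis
  proof (rule bdd_aboveI)
    fix d assume "d \<in> {dist a b | a b. closed_segment a b \<subseteq> bcnf xi ` T}"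
    then obtain a b where d: "d = dist a b" and s: "closed_segment a b \<subseteq> bcnf xi ` T" by auto
    have "norm a \<le> B" "norm b \<le> B" using s B ends_in_segment by blast+
    then show "d \<le> 2 * B" unfolding d dist_norm using norm_triangle_ineq4[of a b] by linarith
  qed
qed

lemma sub_seg:
  assumes "a \<in> closed_segment P Q" "b \<in> closed_segment P Q"
  shows "closed_segment a b \<subseteq> closed_segment P Q"
  using assms by (simp add: subset_closed_segment)

lemma side_le:
  assumes "x \<in> closed_segment a b" "a$1 \<le> (0::real)" "b$1 \<le> 0"
  shows "x$1 \<le> 0"
proof -
  obtain u where u: "0 \<le> u" "u \<le> 1" "x = (1-u) *\<^sub>R a + u *\<^sub>R b"
    using assms(1) by (auto simp: closed_segment_def)
  have "x$1 = (1-u) * a$1 + u * b$1" using u by simp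
  also have "\<dots> \<le> 0" using u assms by (simp add: add_nonpos_nonpos mult_nonneg_nonpos)
  finally show ?thesis .
qed

lemma side_ge:
  assumes "x \<in> closed_segment a b" "a$1 \<ge> (0::real)" "b$1 \<ge> 0"
  shows "x$1 \<ge> 0"
proof -
  obtain u where u: "0 \<le> u" "u \<le> 1" "x = (1-u) *\<^sub>R a + u *\<^sub>R b"
    using assms(1) by (auto simp: closed_segment_def)
  have "x$1 = (1-u) * a$1 + u * b$1" using u by simp
  also have "\<dots> \<ge> 0" using u assms by simp
  finally show ?thesis .
qed

lemma boundL:
  assumes "a \<in> closed_segment P Q" "b \<in> closed_segment P Q" "a$1 \<le> 0" "b$1 \<le> 0"
  shows "norm (AL xi *v (b - a)) \<le> longest_segment_length (bcnf xi ` closed_segment P Q)"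
proof -
  have "closed_segment (gL xi a) (gL xi b) \<subseteq> bcnf xi ` closed_segment P Q"
    by (rule seg_img[OF sub_seg[OF assms(1,2)]])
       (auto intro: bcnf_L side_le assms gL_comb)
  moreover have "dist (gL xi a) (gL xi b) = norm (AL xi *v (b - a))"
    by (simp add: gL_def dist_norm matrix_vector_mult_diff_distrib norm_minus_commute)
  ultimately have "norm (AL xi *v (b - a)) \<in> {dist a b | a b. closed_segment a b \<subseteq> bcnf xi ` closed_segment P Q}"
    by (metis (mono_tags, lifting) mem_Collect_eq)
  then show ?thesis unfolding longest_segment_length_def
    by (intro cSup_upper bdd) auto
qed

lemma boundR:
  assumes "a \<in> closed_segment P Q" "b \<in> closed_segment P Q" "a$1 \<ge> 0" "b$1 \<ge> 0"
  shows "norm (AR xi *v (b - a)) \<le> longest_segment_length (bcnf xi ` closed_segment P Q)"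
proof -
  have "closed_segment (gR xi a) (gR xi b) \<subseteq> bcnf xi ` closed_segment P Q"
    by (rule seg_img[OF sub_seg[OF assms(1,2)]])
       (auto intro: bcnf_R side_ge assms gR_comb)
  moreover have "dist (gR xi a) (gR xi b) = norm (AR xi *v (b - a))"
    by (simp add: gR_def dist_norm matrix_vector_mult_diff_distrib norm_minus_commute)
  ultimately have "norm (AR xi *v (b - a)) \<in> {dist a b | a b. closed_segment a b \<subseteq> bcnf xi ` closed_segment P Q}"
    by (metis (mono_tags, lifting) mem_Collect_eq)
  then show ?thesis unfolding longest_segment_length_def
    by (intro cSup_upper bdd) auto
qed

lemma arith_k:
  fixes t cL cR n s :: real
  assumes "cL > 0" "cR > 0" "0 \<le> t" "t \<le> 1" "n \<ge> 0"
    and "s \<ge> t * cL * n" "s \<ge> (1 - t) * cR * n"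
  shows "s \<ge> cL * cR / (cL + cR) * n"
proof (cases "t \<ge> cR / (cL + cR)")
  case True
  have "cL * cR / (cL + cR) = (cR / (cL + cR)) * cL" by simp
  also have "\<dots> \<le> t * cL" using True assms by (intro mult_right_mono) auto
  finally show ?thesis using assms by (meson mult_right_mono order_trans)
next
  case False
  have "1 - t \<ge> cL / (cL + cR)" using False assms by (simp add: field_simps)
  have "cL * cR / (cL + cR) = (cL / (cL + cR)) * cR" by simp
  also have "\<dots> \<le> (1 - t) * cR" using \<open>1 - t \<ge> _\<close> assms by (intro mult_right_mono) auto
  finally show ?thesis using assms by (meson mult_right_mono order_trans)
qed

lemma k_le: "cL > 0 \<Longrightarrow> cR > 0 \<Longrightarrow> cL * cR / (cL + cR) \<le> (cL::real)"
  "cL > 0 \<Longrightarrow> cR > 0 \<Longrightarrow> cL * cR / (cL + cR) \<le> (cR::real)"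
  by (simp_all add: field_simps)

lemma normA: "norm (A *v (t *\<^sub>R v)) = \<bar>t\<bar> * norm (A *v (v::real^2))"
  by (simp add: matrix_vector_mult_scaleR)

theorem lemma5p1:
  fixes xi :: "real \<times> real \<times> real \<times> real" and P v :: "real^2" and cL cR :: real
  assumes "cL > 0" and "cR > 0"
    and "norm (AL xi *v v) \<ge> cL * norm v"
    and "norm (AR xi *v v) \<ge> cR * norm v"
  shows "longest_segment_length (bcnf xi ` closed_segment P (P + v))
           \<ge> cL * cR / (cL + cR) * dist P (P + v)"
proof -
  define Q where "Q = P + v"
  define S where "S = longest_segment_length (bcnf xi ` closed_segment P Q)"
  define k where "k = cL * cR / (cL + cR)"
  have dPQ: "dist P (P + v) = norm v" by (simp add: dist_norm)
  have PQ: "P \<in> closed_segment P Q" "Q \<in> closed_segment P Q" by auto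
  have vQ: "v = Q - P" by (simp add: Q_def)
  have nv: "norm v \<ge> 0" by simp
  have "S \<ge> k * norm v"
  proof (cases "P$1 \<le> 0 \<and> Q$1 \<le> 0")
    case True
    have "norm (AL xi *v v) \<le> S" unfolding S_def vQ using boundL[OF PQ] True by auto
    moreover have "k * norm v \<le> cL * norm v" unfolding k_def
      using k_le assms by (intro mult_right_mono) auto
    ultimately show ?thesis using assms by linarith
  next
    case F1: False
    show ?thesis
    proof (cases "P$1 \<ge> 0 \<and> Q$1 \<ge> 0")
      case True
      have "norm (AR xi *v v) \<le> S" unfolding S_def vQ using boundR[OF PQ] True by auto
      moreover have "k * norm v \<le> cR * norm v" unfolding k_def
        using k_le assms by (intro mult_right_mono) auto
      ultimately show ?thesis using assms by linarith
    next
      case F2: False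
      have ne: "v$1 \<noteq> 0" using F1 F2 by (auto simp: Q_def)
      define t where "t = - P$1 / v$1"
      define M where "M = P + t *\<^sub>R v"
      have sgn: "(P$1 < 0 \<and> Q$1 > 0) \<or> (P$1 > 0 \<and> Q$1 < 0)" using F1 F2 by auto
      have Q1: "Q$1 = P$1 + v$1" by (simp add: Q_def)
      have t01: "0 \<le> t" "t \<le> 1" using sgn ne unfolding t_def Q1
        by (auto simp: field_simps)
      have M1: "M$1 = 0" using ne by (simp add: M_def t_def)
      have Mseg: "M \<in> closed_segment P Q"
        unfolding closed_segment_def M_def Q_def using t01
        by (intro CollectI exI[of _ t]) (auto simp: algebra_simps)
      have MP: "M - P = t *\<^sub>R v" by (simp add: M_def)
      have QM: "Q - M = (1 - t) *\<^sub>R v" by (simp add: M_def Q_def algebra_simps)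
      from sgn show ?thesis
      proof
        assume h: "P$1 < 0 \<and> Q$1 > 0"
        have "norm (AL xi *v (M - P)) \<le> S" unfolding S_def
          using boundL[OF PQ(1) Mseg] h M1 by auto
        hence s1: "S \<ge> t * cL * norm v" unfolding MP normA using t01 assms
          by (metis abs_of_nonneg mult.assoc mult_left_mono order_trans)
        have "norm (AR xi *v (Q - M)) \<le> S" unfolding S_def
          using boundR[OF Mseg PQ(2)] h M1 by auto
        hence s2: "S \<ge> (1 - t) * cR * norm v" unfolding QM normA using t01 assms
          by (metis abs_of_nonneg diff_ge_0_iff_ge mult.assoc mult_left_mono order_trans)
        show ?thesis unfolding k_def by (rule arith_k[OF assms(1,2) t01 nv s1 s2])
      next
        assume h: "P$1 > 0 \<and> Q$1 < 0"
        have "norm (AR xi *v (M - P)) \<le> S" unfolding S_def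
          using boundR[OF PQ(1) Mseg] h M1 by auto
        hence s1: "S \<ge> t * cR * norm v" unfolding MP normA using t01 assms
          by (metis abs_of_nonneg mult.assoc mult_left_mono order_trans)
        have "norm (AL xi *v (Q - M)) \<le> S" unfolding S_def
          using boundL[OF Mseg PQ(2)] h M1 by auto
        hence s2: "S \<ge> (1 - t) * cL * norm v" unfolding QM normA using t01 assms
          by (metis abs_of_nonneg diff_ge_0_iff_ge mult.assoc mult_left_mono order_trans)
        have "S \<ge> cR * cL / (cR + cL) * norm v"
          by (rule arith_k[OF assms(2,1) t01 nv s1 s2])
        thus ?thesis unfolding k_def by (simp add: mult.commute add.commute)
      qed
    qed
  qed
  thus ?thesis unfolding S_def k_def Q_def dPQ .
qed

end
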